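(* Let $M=B\circ S$ and $x,x'\in\mathbb X$. Let $A_1,\dots,A_I$ and $E_1,\dots,E_J$ be two partitions of $\mathbb Y$ into disjoint sets such that $\Pr[S(x)\in A_i]>0$ for all $i$ and $\Pr[S(x')\in E_j]>0$ for all $j$. Let $\gamma$ be any coupling between the $I+J$ conditional pmfs $s_x(\cdot\mid A_1),\dots,s_x(\cdot\mid A_I),s_{x'}(\cdot\mid E_1),\dots,s_{x'}(\cdot\mid E_J)$, viewed as a pmf on tuples $(\mathbf y^{(1)},\mathbf y^{(2)})\in\mathbb Y^I\times\mathbb Y^J$. Then $$\Psi_\alpha(m_x\|m_{x'})\le\sum_{(\mathbf y^{(1)},\mathbf y^{(2)})\in\mathbb Y^{I+J}} c_\alpha(\mathbf y^{(1)},\mathbf y^{(2)})\,\gamma(\mathbf y^{(1)},\mathbf y^{(2)}),$$ where $$c_\alpha(\mathbf y^{(1)},\mathbf y^{(2)})=\Psi_\alpha\Big(\sum_{i=1}^I b_{y^{(1)}_i}\Pr[S(x)\in A_i]\ \Big\|\ \sum_{j=1}^J b_{y^{(2)}_j}\Pr[S(x')\in E_j]\Big).$$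
   Context: Setting: $\mathbb A$ is a finite set, the dataset space $\mathbb X\subseteq\mathcal P(\mathbb A)$, and $\mathbb Y$ is a finite batch space. A subsampling scheme $S$ assigns to each dataset $x$ a pmf $s_x$ on $\mathbb Y$; $\Pr[S(x)\in A]=\sum_{y\in A}s_x(y)$ and $s_x(y\mid A)=s_x(y)\mathbb 1[y\in A]/\Pr[S(x)\in A]$. A base mechanism $B$ assigns to each batch $y$ a probability density $b_y$ on $\mathbb R^D$. The subsampled mechanism $M=B\circ S$ has density $m_x(z)=\sum_{y}b_y(z)s_x(y)$. $H_\alpha(p\|q)=\int\max\{p-\alpha q,0\}dz$ ($\alpha\ge0$), $\Lambda_\alpha(p\|q)=\int p^\alpha q^{1-\alpha}dz$ ($\alpha>1$); $\Psi_\alpha$ denotes either $H_\alpha$ with $\alpha\ge0$ or $\Lambda_\alpha$ with $\alpha>1$. A coupling between pmfs $p_1,\dots,p_N$ on $\mathbb Y$ is a pmf on $\mathbb Y^N$ whose $n$-th marginal is $p_n$. *)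

theory Defs
  imports "HOL-Analysis.Analysis" "HOL-Probability.Probability"
begin

definition hockey_stick :: "real \<Rightarrow> ('e::euclidean_space \<Rightarrow> real) \<Rightarrow> ('e \<Rightarrow> real) \<Rightarrow> ennreal" where
  "hockey_stick \<alpha> p q = (\<integral>\<^sup>+ z. ennreal (max (p z - \<alpha> * q z) 0) \<partial>lborel)"

definition renyi_integrand :: "real \<Rightarrow> real \<Rightarrow> real \<Rightarrow> ennreal" where
  "renyi_integrand \<alpha> p q =
     (if p = 0 then 0 else if q = 0 then \<infinity> else ennreal (p powr \<alpha> * q powr (1 - \<alpha>)))"

definition renyi_lambda :: "real \<Rightarrow> ('e::euclidean_space \<Rightarrow> real) \<Rightarrow> ('e \<Rightarrow> real) \<Rightarrow> ennreal" where
  "renyi_lambda \<alpha> p q = (\<integral>\<^sup>+ z. renyi_integrand \<alpha> (p z) (q z) \<partial>lborel)"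

datatype div_kind = HockeyStick | RenyiLambda

definition valid_div :: "div_kind \<Rightarrow> real \<Rightarrow> bool" where
  "valid_div k \<alpha> = (case k of HockeyStick \<Rightarrow> \<alpha> \<ge> 0 | RenyiLambda \<Rightarrow> \<alpha> > 1)"

definition Psi :: "div_kind \<Rightarrow> real \<Rightarrow> ('e::euclidean_space \<Rightarrow> real) \<Rightarrow> ('e \<Rightarrow> real) \<Rightarrow> ennreal" where
  "Psi k \<alpha> p q = (case k of HockeyStick \<Rightarrow> hockey_stick \<alpha> p q | RenyiLambda \<Rightarrow> renyi_lambda \<alpha> p q)"

definition mech_density :: "('a set \<Rightarrow> 'y::finite pmf) \<Rightarrow> ('y \<Rightarrow> 'e \<Rightarrow> real) \<Rightarrow> 'a set \<Rightarrow> 'e \<Rightarrow> real" where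
  "mech_density S b x z = (\<Sum>y\<in>UNIV. b y z * pmf (S x) y)"

definition is_density :: "('e::euclidean_space \<Rightarrow> real) \<Rightarrow> bool" where
  "is_density f \<longleftrightarrow> f \<in> borel_measurable lborel \<and> (\<forall>z. f z \<ge> 0) \<and> (\<integral>\<^sup>+ z. ennreal (f z) \<partial>lborel) = 1"

definition is_partition :: "nat \<Rightarrow> (nat \<Rightarrow> 'y set) \<Rightarrow> bool" where
  "is_partition I A \<longleftrightarrow> (\<forall>i<I. \<forall>j<I. i \<noteq> j \<longrightarrow> A i \<inter> A j = {}) \<and> (\<Union>i<I. A i) = UNIV"

end

theory Submission
  imports Defs
begin

lemma jensen_persp:
  fixes w p q :: "'k \<Rightarrow> real"
  assumes fin: "finite K" and ne: "K \<noteq> {}" and pos: "\<And>k. k \<in> K \<Longrightarrow> w k > 0 \<and> p k > 0 \<and> q k > 0"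
    and a: "\<alpha> \<ge> 1"
  shows "(\<Sum>k\<in>K. w k * p k) powr \<alpha> * (\<Sum>k\<in>K. w k * q k) powr (1 - \<alpha>)
         \<le> (\<Sum>k\<in>K. w k * (p k powr \<alpha> * q k powr (1 - \<alpha>)))"
proof -
  define P where "P = (\<Sum>k\<in>K. w k * p k)"
  define Q where "Q = (\<Sum>k\<in>K. w k * q k)"
  define S where "S = (\<Sum>k\<in>K. w k * (p k powr \<alpha> * q k powr (1 - \<alpha>)))"
  have Qpos: "Q > 0" unfolding Q_def using fin ne pos by (intro sum_pos) auto
  have Ppos: "P > 0" unfolding P_def using fin ne pos by (intro sum_pos) auto
  define l where "l k = w k * q k / Q" for k
  define t where "t k = p k / q k" for k
  have l1: "(\<Sum>k\<in>K. l k) = 1" unfolding l_def using Qpos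
    by (simp add: sum_divide_distrib[symmetric] Q_def)
  have "(\<Sum>k\<in>K. l k *\<^sub>R t k) = P / Q"
    unfolding l_def t_def P_def sum_divide_distrib using pos by (intro sum.cong) (auto, metis less_irrefl)
  moreover have J: "(\<lambda>x. x powr \<alpha>) (\<Sum>k\<in>K. l k *\<^sub>R t k) \<le> (\<Sum>k\<in>K. l k * (t k powr \<alpha>))"
    using fin ne l1 pos Qpos
    by (intro convex_on_sum[OF _ _ powr_convex[OF a]]) (auto simp: l_def t_def dest!: pos)
  moreover have "(\<Sum>k\<in>K. l k * (t k powr \<alpha>)) = S / Q"
  proof -
    have "l k * (t k powr \<alpha>) = w k * (p k powr \<alpha> * q k powr (1 - \<alpha>)) / Q" if "k \<in> K" for k
    proof -
      have qk: "q k > 0" using pos that by auto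
      have e: "q k powr (1 - \<alpha>) = q k / q k powr \<alpha>" using qk by (simp add: powr_diff)
      have qa: "q k powr \<alpha> > 0" using qk by simp
      show ?thesis unfolding l_def t_def e using qk qa Qpos by (simp add: powr_divide field_simps)
    qed
    then show ?thesis unfolding S_def by (simp add: sum_divide_distrib)
  qed
  ultimately have "(P / Q) powr \<alpha> \<le> S / Q" by simp
  then have "P powr \<alpha> / Q powr \<alpha> \<le> S / Q" using Ppos Qpos by (simp add: powr_divide)
  then have "Q * (P powr \<alpha> / Q powr \<alpha>) \<le> S" using Qpos by (simp add: field_simps)
  moreover have "Q * (P powr \<alpha> / Q powr \<alpha>) = P powr \<alpha> * Q powr (1 - \<alpha>)"
    using Qpos by (simp add: powr_diff)
  ultimately show ?thesis unfolding P_def Q_def S_def by simp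
qed

definition psi_int :: "div_kind \<Rightarrow> real \<Rightarrow> real \<Rightarrow> real \<Rightarrow> ennreal" where
  "psi_int kd \<alpha> p q = (case kd of HockeyStick \<Rightarrow> ennreal (max (p - \<alpha> * q) 0)
     | RenyiLambda \<Rightarrow> renyi_integrand \<alpha> p q)"

lemma Psi_eq: "Psi kd \<alpha> p q = (\<integral>\<^sup>+ z. psi_int kd \<alpha> (p z) (q z) \<partial>lborel)"
  by (cases kd) (simp_all add: Psi_def psi_int_def hockey_stick_def renyi_lambda_def)

lemma hockey_convex:
  fixes w p q :: "'k \<Rightarrow> real"
  assumes fin: "finite K" and w: "\<And>k. k \<in> K \<Longrightarrow> w k \<ge> 0"
  shows "ennreal (max ((\<Sum>k\<in>K. w k * p k) - \<alpha> * (\<Sum>k\<in>K. w k * q k)) 0)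
    \<le> (\<Sum>k\<in>K. ennreal (w k) * ennreal (max (p k - \<alpha> * q k) 0))"
proof -
  have "(\<Sum>k\<in>K. w k * p k) - \<alpha> * (\<Sum>k\<in>K. w k * q k) = (\<Sum>k\<in>K. w k * (p k - \<alpha> * q k))"
    by (simp add: sum_distrib_left sum_subtractf algebra_simps)
  also have "\<dots> \<le> (\<Sum>k\<in>K. w k * max (p k - \<alpha> * q k) 0)"
    using w by (intro sum_mono mult_left_mono) auto
  finally have "max ((\<Sum>k\<in>K. w k * p k) - \<alpha> * (\<Sum>k\<in>K. w k * q k)) 0 \<le> (\<Sum>k\<in>K. w k * max (p k - \<alpha> * q k) 0)"
    using w by (auto intro: sum_nonneg)
  then have "ennreal (max ((\<Sum>k\<in>K. w k * p k) - \<alpha> * (\<Sum>k\<in>K. w k * q k)) 0) \<le> ennreal (\<Sum>k\<in>K. w k * max (p k - \<alpha> * q k) 0)"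
    by (rule ennreal_leI)
  also have "\<dots> = (\<Sum>k\<in>K. ennreal (w k * max (p k - \<alpha> * q k) 0))"
    using w by (subst sum_ennreal) auto
  also have "\<dots> = (\<Sum>k\<in>K. ennreal (w k) * ennreal (max (p k - \<alpha> * q k) 0))"
    using w by (intro sum.cong) (auto simp: ennreal_mult)
  finally show ?thesis .
qed

lemma renyi_convex:
  fixes w p q :: "'k \<Rightarrow> real"
  assumes fin: "finite K" and nn: "\<And>k. k \<in> K \<Longrightarrow> w k \<ge> 0 \<and> p k \<ge> 0 \<and> q k \<ge> 0"
    and a: "\<alpha> > 1"
  shows "renyi_integrand \<alpha> (\<Sum>k\<in>K. w k * p k) (\<Sum>k\<in>K. w k * q k)
    \<le> (\<Sum>k\<in>K. ennreal (w k) * renyi_integrand \<alpha> (p k) (q k))"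
proof (cases "\<exists>k\<in>K. w k > 0 \<and> p k > 0 \<and> q k = 0")
  case True
  then obtain k where k: "k \<in> K" "w k > 0" "p k > 0" "q k = 0" by auto
  have "ennreal (w k) * renyi_integrand \<alpha> (p k) (q k) = \<infinity>"
    using k by (simp add: renyi_integrand_def ennreal_mult_top)
  moreover have "ennreal (w k) * renyi_integrand \<alpha> (p k) (q k) \<le> (\<Sum>k\<in>K. ennreal (w k) * renyi_integrand \<alpha> (p k) (q k))"
    using fin k(1) by (intro member_le_sum) auto
  ultimately show ?thesis by (simp add: top_unique)
next
  case False
  define K3 where "K3 = {k\<in>K. w k > 0 \<and> p k > 0}"
  have fin3: "finite K3" using fin by (simp add: K3_def)
  have pos3: "k \<in> K3 \<Longrightarrow> w k > 0 \<and> p k > 0 \<and> q k > 0" for k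
    using False nn[of k] by (auto simp: K3_def less_le)
  have P3: "(\<Sum>k\<in>K. w k * p k) = (\<Sum>k\<in>K3. w k * p k)"
    unfolding K3_def using fin nn by (intro sum.mono_neutral_right) (auto simp: less_le)
  have Q3: "(\<Sum>k\<in>K3. w k * q k) \<le> (\<Sum>k\<in>K. w k * q k)"
    unfolding K3_def using fin nn by (intro sum_mono2) auto
  show ?thesis
  proof (cases "K3 = {}")
    case True
    then show ?thesis using P3 by (simp add: renyi_integrand_def)
  next
    case ne: False
    have Q3pos: "(\<Sum>k\<in>K3. w k * q k) > 0" using fin3 ne pos3 by (intro sum_pos) auto
    have P3pos: "(\<Sum>k\<in>K3. w k * p k) > 0" using fin3 ne pos3 by (intro sum_pos) auto
    have Qpos: "(\<Sum>k\<in>K. w k * q k) > 0" using Q3 Q3pos by linarith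
    have "renyi_integrand \<alpha> (\<Sum>k\<in>K. w k * p k) (\<Sum>k\<in>K. w k * q k)
       = ennreal ((\<Sum>k\<in>K3. w k * p k) powr \<alpha> * (\<Sum>k\<in>K. w k * q k) powr (1 - \<alpha>))"
      using P3 P3pos Qpos by (simp add: renyi_integrand_def)
    also have "\<dots> \<le> ennreal ((\<Sum>k\<in>K3. w k * p k) powr \<alpha> * (\<Sum>k\<in>K3. w k * q k) powr (1 - \<alpha>))"
      using Q3 Q3pos a by (intro ennreal_leI mult_left_mono powr_mono2') auto
    also have "\<dots> \<le> ennreal (\<Sum>k\<in>K3. w k * (p k powr \<alpha> * q k powr (1 - \<alpha>)))"
      using a by (intro ennreal_leI jensen_persp fin3 ne pos3) auto
    also have "\<dots> = (\<Sum>k\<in>K3. ennreal (w k) * renyi_integrand \<alpha> (p k) (q k))"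
    proof -
      have "ennreal (w k * (p k powr \<alpha> * q k powr (1 - \<alpha>))) = ennreal (w k) * renyi_integrand \<alpha> (p k) (q k)"
        if "k \<in> K3" for k
      proof -
        have "w k > 0" "p k > 0" "q k > 0" using pos3[OF that] by auto
        then show ?thesis by (simp add: renyi_integrand_def ennreal_mult)
      qed
      moreover have "w k * (p k powr \<alpha> * q k powr (1 - \<alpha>)) \<ge> 0" if "k \<in> K3" for k
        using pos3[OF that] by auto
      ultimately show ?thesis by (subst sum_ennreal[symmetric]) (auto intro!: sum.cong)
    qed
    also have "\<dots> \<le> (\<Sum>k\<in>K. ennreal (w k) * renyi_integrand \<alpha> (p k) (q k))"
      using fin by (intro sum_mono2) (auto simp: K3_def)
    finally show ?thesis .
  qed
qed

lemma psi_int_convex: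
  fixes w p q :: "'k \<Rightarrow> real"
  assumes fin: "finite K" and nn: "\<And>k. k \<in> K \<Longrightarrow> w k \<ge> 0 \<and> p k \<ge> 0 \<and> q k \<ge> 0"
    and v: "valid_div kd \<alpha>"
  shows "psi_int kd \<alpha> (\<Sum>k\<in>K. w k * p k) (\<Sum>k\<in>K. w k * q k)
    \<le> (\<Sum>k\<in>K. ennreal (w k) * psi_int kd \<alpha> (p k) (q k))"
  using v hockey_convex[OF fin, of w p \<alpha> q] renyi_convex[OF fin nn, where \<alpha>=\<alpha>] nn
  by (cases kd) (auto simp: psi_int_def valid_div_def)

lemma decomp:
  fixes p :: "'y::finite pmf" and \<gamma> :: "'c pmf" and f :: "'c \<Rightarrow> 'y list" and b :: "'y \<Rightarrow> 'e \<Rightarrow> real"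
  assumes finK: "finite K" and sub: "set_pmf \<gamma> \<subseteq> K"
    and part: "is_partition I A"
    and pos: "\<forall>i<I. measure_pmf.prob p (A i) > 0"
    and marg: "\<forall>i<I. map_pmf (\<lambda>c. f c ! i) \<gamma> = cond_pmf p (A i)"
  shows "(\<Sum>y\<in>UNIV. b y z * pmf p y) = (\<Sum>c\<in>K. pmf \<gamma> c * (\<Sum>i<I. b (f c ! i) z * measure_pmf.prob p (A i)))"
proof -
  have inner: "measure_pmf.prob p (A i) * (\<Sum>c\<in>K. pmf \<gamma> c * b (f c ! i) z) = (\<Sum>y\<in>A i. b y z * pmf p y)"
    if i: "i < I" for i
  proof -
    have ne: "set_pmf p \<inter> A i \<noteq> {}" using pos i measure_pmf_zero_iff[of p "A i"] by auto
    have pa: "measure_pmf.prob p (A i) > 0" using pos i by auto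
    have "(\<Sum>c\<in>K. pmf \<gamma> c * b (f c ! i) z) = measure_pmf.expectation \<gamma> (\<lambda>c. b (f c ! i) z)"
      using sub by (subst integral_measure_pmf[OF finK]) auto
    also have "\<dots> = measure_pmf.expectation (map_pmf (\<lambda>c. f c ! i) \<gamma>) (\<lambda>y. b y z)"
      by simp
    also have "\<dots> = measure_pmf.expectation (cond_pmf p (A i)) (\<lambda>y. b y z)"
      using marg i by simp
    also have "\<dots> = (\<Sum>y\<in>UNIV. pmf (cond_pmf p (A i)) y * b y z)"
      by (subst integral_measure_pmf[of UNIV]) auto
    also have "\<dots> = (\<Sum>y\<in>UNIV. (if y \<in> A i then pmf p y / measure_pmf.prob p (A i) else 0) * b y z)"
      using ne by (simp add: pmf_cond)
    also have "\<dots> = (\<Sum>y\<in>A i. pmf p y / measure_pmf.prob p (A i) * b y z)"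
    proof -
      have "(\<Sum>y\<in>UNIV. (if y \<in> A i then pmf p y / measure_pmf.prob p (A i) else 0) * b y z)
         = (\<Sum>y\<in>UNIV. if y \<in> A i then pmf p y / measure_pmf.prob p (A i) * b y z else 0)"
        by (intro sum.cong) auto
      also have "\<dots> = (\<Sum>y\<in>A i. pmf p y / measure_pmf.prob p (A i) * b y z)"
        by (simp add: sum.If_cases)
      finally show ?thesis .
    qed
    finally show ?thesis using pa by (simp add: sum_distrib_left field_simps)
  qed
  have disj: "\<forall>i\<in>{..<I}. \<forall>j\<in>{..<I}. i \<noteq> j \<longrightarrow> A i \<inter> A j = {}" and un: "(\<Union>i<I. A i) = UNIV"
    using part by (auto simp: is_partition_def)
  have "(\<Sum>y\<in>UNIV. b y z * pmf p y) = (\<Sum>i<I. \<Sum>y\<in>A i. b y z * pmf p y)"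
    using sum.UNION_disjoint[of "{..<I}" A "\<lambda>y. b y z * pmf p y"] disj un by simp
  also have "\<dots> = (\<Sum>i<I. measure_pmf.prob p (A i) * (\<Sum>c\<in>K. pmf \<gamma> c * b (f c ! i) z))"
    using inner by simp
  also have "\<dots> = (\<Sum>c\<in>K. pmf \<gamma> c * (\<Sum>i<I. b (f c ! i) z * measure_pmf.prob p (A i)))"
    by (simp add: sum_distrib_left mult_ac sum.swap[of _ "{..<I}"])
  finally show ?thesis .
qed

lemma psi_int_meas:
  fixes p q :: "'e::euclidean_space \<Rightarrow> real"
  assumes "p \<in> borel_measurable lborel" "q \<in> borel_measurable lborel"
  shows "(\<lambda>z. psi_int kd \<alpha> (p z) (q z)) \<in> borel_measurable lborel"
  using assms by (cases kd) (simp_all add: psi_int_def renyi_integrand_def, measurable)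

theorem theorem3p4:
  fixes \<A> :: "'a set" and \<X> :: "'a set set"
    and S :: "'a set \<Rightarrow> 'y::finite pmf"
    and b :: "'y \<Rightarrow> real^'d \<Rightarrow> real"
    and x x' :: "'a set"
    and I J :: nat and A E :: "nat \<Rightarrow> 'y set"
    and \<gamma> :: "('y list \<times> 'y list) pmf"
    and k :: div_kind and \<alpha> :: real
  assumes "finite \<A>" and "\<X> \<subseteq> Pow \<A>" and "x \<in> \<X>" and "x' \<in> \<X>"
    and "\<forall>y. is_density (b y)"
    and "is_partition I A" and "is_partition J E"
    and "\<forall>i<I. measure_pmf.prob (S x) (A i) > 0"
    and "\<forall>j<J. measure_pmf.prob (S x') (E j) > 0"
    and "set_pmf \<gamma> \<subseteq> {(u, v). length u = I \<and> length v = J}"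
    and "\<forall>i<I. map_pmf (\<lambda>(u, v). u ! i) \<gamma> = cond_pmf (S x) (A i)"
    and "\<forall>j<J. map_pmf (\<lambda>(u, v). v ! j) \<gamma> = cond_pmf (S x') (E j)"
    and "valid_div k \<alpha>"
  shows "Psi k \<alpha> (mech_density S b x) (mech_density S b x') \<le>
    (\<Sum>(u, v)\<in>{(u, v). length u = I \<and> length v = J}.
        Psi k \<alpha> (\<lambda>z. \<Sum>i<I. b (u ! i) z * measure_pmf.prob (S x) (A i))
                 (\<lambda>z. \<Sum>j<J. b (v ! j) z * measure_pmf.prob (S x') (E j))
        * ennreal (pmf \<gamma> (u, v)))"
proof -
  note as = assms
  define K where "K = {(u::'y list, v). length u = I \<and> length (v::'y list) = J}"
  have finK: "finite K"
  proof -
    have Keq: "K = {u. set u \<subseteq> UNIV \<and> length u = I} \<times> {v. set v \<subseteq> UNIV \<and> length v = J}"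
      by (auto simp: K_def)
    moreover have f12: "finite {u::'y list. set u \<subseteq> UNIV \<and> length u = I}" "finite {v::'y list. set v \<subseteq> UNIV \<and> length v = J}"
      by (rule finite_lists_length_eq, simp)+
    show ?thesis unfolding Keq by (rule finite_cartesian_product[OF f12])
  qed
  define Pf where "Pf (c::'y list \<times> 'y list) z = (\<Sum>i<I. b (fst c ! i) z * measure_pmf.prob (S x) (A i))" for c z
  define Qf where "Qf (c::'y list \<times> 'y list) z = (\<Sum>j<J. b (snd c ! j) z * measure_pmf.prob (S x') (E j))" for c z
  have sub: "set_pmf \<gamma> \<subseteq> K" using as(10) by (simp add: K_def)
  have bm: "b y \<in> borel_measurable lborel" and bnn: "b y z \<ge> 0" for y z
    using as(5) by (auto simp: is_density_def)
  have m1: "mech_density S b x z = (\<Sum>c\<in>K. pmf \<gamma> c * Pf c z)" for z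
    unfolding mech_density_def Pf_def
    by (rule decomp[OF finK sub as(6) as(8)]) (use as(11) in \<open>simp add: split_beta'\<close>)
  have m2: "mech_density S b x' z = (\<Sum>c\<in>K. pmf \<gamma> c * Qf c z)" for z
    unfolding mech_density_def Qf_def
    by (rule decomp[OF finK sub as(7) as(9)]) (use as(12) in \<open>simp add: split_beta'\<close>)
  have Pm: "Pf c \<in> borel_measurable lborel" for c
    unfolding Pf_def by (intro borel_measurable_sum borel_measurable_times bm) auto
  have Qm: "Qf c \<in> borel_measurable lborel" for c
    unfolding Qf_def by (intro borel_measurable_sum borel_measurable_times bm) auto
  have Pnn: "Pf c z \<ge> 0" for c z unfolding Pf_def by (intro sum_nonneg mult_nonneg_nonneg bnn) auto
  have Qnn: "Qf c z \<ge> 0" for c z unfolding Qf_def by (intro sum_nonneg mult_nonneg_nonneg bnn) auto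
  have meas: "(\<lambda>z. ennreal (pmf \<gamma> c) * psi_int k \<alpha> (Pf c z) (Qf c z)) \<in> borel_measurable lborel" for c
    using psi_int_meas[OF Pm Qm, of k \<alpha> c c] by measurable
  have "Psi k \<alpha> (mech_density S b x) (mech_density S b x')
      = (\<integral>\<^sup>+ z. psi_int k \<alpha> (\<Sum>c\<in>K. pmf \<gamma> c * Pf c z) (\<Sum>c\<in>K. pmf \<gamma> c * Qf c z) \<partial>lborel)"
    by (simp add: Psi_eq m1 m2)
  also have "\<dots> \<le> (\<integral>\<^sup>+ z. (\<Sum>c\<in>K. ennreal (pmf \<gamma> c) * psi_int k \<alpha> (Pf c z) (Qf c z)) \<partial>lborel)"
    by (intro nn_integral_mono psi_int_convex finK as(13)) (auto simp: Pnn Qnn)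
  also have "\<dots> = (\<Sum>c\<in>K. \<integral>\<^sup>+ z. ennreal (pmf \<gamma> c) * psi_int k \<alpha> (Pf c z) (Qf c z) \<partial>lborel)"
    by (rule nn_integral_sum) (rule meas)
  also have "\<dots> = (\<Sum>c\<in>K. ennreal (pmf \<gamma> c) * Psi k \<alpha> (Pf c) (Qf c))"
    by (intro sum.cong refl) (simp only: Psi_eq nn_integral_cmult[OF psi_int_meas[OF Pm Qm]])
  also have "\<dots> = (\<Sum>(u, v)\<in>{(u, v). length u = I \<and> length v = J}.
        Psi k \<alpha> (\<lambda>z. \<Sum>i<I. b (u ! i) z * measure_pmf.prob (S x) (A i))
                 (\<lambda>z. \<Sum>j<J. b (v ! j) z * measure_pmf.prob (S x') (E j))
        * ennreal (pmf \<gamma> (u, v)))"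
    unfolding K_def Pf_def Qf_def by (intro sum.cong refl) (auto simp: mult.commute)
  finally show ?thesis .
qed

end
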